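(* Let $\mathcal{M}=(E,\mathcal{I})$ be a loopless matroid with density $\gamma(\mathcal{M})$. (i) The following algorithm is $\gamma(\mathcal{M})$-competitive in the zero information model: write the vector $\vec v\in\mathbb{R}^E$ with all coordinates equal to $1/\gamma(\mathcal{M})$ as a convex combination $\vec v=\sum_{I\in\mathcal{I}}\lambda_I\chi_I$ of incidence vectors of independent sets; select $I\in\mathcal{I}$ at random with probability $\lambda_I$; accept exactly the elements of $I$ as they arrive, without looking at weights. (ii) Let $\mathcal{M}'=(E',\mathcal{I}')$ be the simple matroid obtained from $\mathcal{M}$ by deleting all but one element in each parallel class, and let $\mathcal{A}$ be any online algorithm that is $e$-competitive in the zero information model for partition matroids in which every part has capacity one. The algorithm that first selects $I'\in\mathcal{I}'$ as in (i) applied to $\mathcal{M}'$, and then runs $\mathcal{A}$ on the partition matroid whose parts are the parallel classes of $\mathcal{M}$ represented in $I'$ (each with capacity one), discarding all other elements, is $e\,\gamma(\mathcal{M}')$-competitive.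
   Context: For a loopless matroid $\mathcal{M}=(E,\mathcal{I})$ with rank function $r$, its density is $\gamma(\mathcal{M})=\max_{\emptyset\neq X\subseteq E}|X|/r(X)$. Two elements are parallel if they form a circuit; parallel classes are the equivalence classes of this relation (together with reflexivity). Zero information model: an adversary assigns arbitrary nonnegative weights; elements are revealed in uniformly random order; the online algorithm irrevocably accepts or rejects each element on arrival, keeping the accepted set independent. An algorithm returning $\mathrm{ALG}$ is $\alpha$-competitive if $\alpha\,\mathbb{E}[w(\mathrm{ALG})]\geq w(\mathrm{OPT})$ for every weight assignment, $\mathrm{OPT}$ being a maximum-weight independent set. *)

theory Defs
  imports "HOL-Probability.Probability" "HOL-Combinatorics.Multiset_Permutations"
begin

definition matroid :: "'a set \<Rightarrow> ('a set \<Rightarrow> bool) \<Rightarrow> bool" where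
  "matroid E indep \<longleftrightarrow> finite E \<and> (\<forall>I. indep I \<longrightarrow> I \<subseteq> E) \<and> indep {} \<and>
     (\<forall>I J. indep J \<and> I \<subseteq> J \<longrightarrow> indep I) \<and>
     (\<forall>I J. indep I \<and> indep J \<and> card I < card J \<longrightarrow> (\<exists>x\<in>J - I. indep (insert x I)))"

definition rank :: "('a set \<Rightarrow> bool) \<Rightarrow> 'a set \<Rightarrow> nat" where
  "rank indep X = Max {card I | I. I \<subseteq> X \<and> indep I}"

definition loopless :: "'a set \<Rightarrow> ('a set \<Rightarrow> bool) \<Rightarrow> bool" where
  "loopless E indep \<longleftrightarrow> (\<forall>e\<in>E. indep {e})"

definition matroid_density :: "'a set \<Rightarrow> ('a set \<Rightarrow> bool) \<Rightarrow> real" where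
  "matroid_density E indep = Max {real (card X) / real (rank indep X) | X. X \<subseteq> E \<and> X \<noteq> {}}"

definition circuit :: "'a set \<Rightarrow> ('a set \<Rightarrow> bool) \<Rightarrow> 'a set \<Rightarrow> bool" where
  "circuit E indep C \<longleftrightarrow> C \<subseteq> E \<and> \<not> indep C \<and> (\<forall>x\<in>C. indep (C - {x}))"

definition parallel :: "'a set \<Rightarrow> ('a set \<Rightarrow> bool) \<Rightarrow> 'a \<Rightarrow> 'a \<Rightarrow> bool" where
  "parallel E indep e f \<longleftrightarrow> e = f \<or> circuit E indep {e, f}"

definition parallel_class :: "'a set \<Rightarrow> ('a set \<Rightarrow> bool) \<Rightarrow> 'a \<Rightarrow> 'a set" where
  "parallel_class E indep e = {f \<in> E. parallel E indep e f}"

definition simplification_set :: "'a set \<Rightarrow> ('a set \<Rightarrow> bool) \<Rightarrow> 'a set \<Rightarrow> bool" where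
  "simplification_set E indep E' \<longleftrightarrow> E' \<subseteq> E \<and> (\<forall>e\<in>E. \<exists>!f. f \<in> E' \<and> parallel E indep e f)"

definition restrict_indep :: "('a set \<Rightarrow> bool) \<Rightarrow> 'a set \<Rightarrow> 'a set \<Rightarrow> bool" where
  "restrict_indep indep E' X \<longleftrightarrow> indep X \<and> X \<subseteq> E'"

text \<open>partition matroid with parts P, every part of capacity one (ground set = union of P)\<close>
definition is_partition :: "'a set set \<Rightarrow> bool" where
  "is_partition P \<longleftrightarrow> finite P \<and> (\<forall>B\<in>P. finite B \<and> B \<noteq> {}) \<and>
     (\<forall>B\<in>P. \<forall>C\<in>P. B \<noteq> C \<longrightarrow> B \<inter> C = {})"

definition partition_indep :: "'a set set \<Rightarrow> 'a set \<Rightarrow> bool" where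
  "partition_indep P X \<longleftrightarrow> X \<subseteq> \<Union>P \<and> (\<forall>B\<in>P. card (X \<inter> B) \<le> 1)"

definition opt_weight :: "'a set \<Rightarrow> ('a set \<Rightarrow> bool) \<Rightarrow> ('a \<Rightarrow> real) \<Rightarrow> real" where
  "opt_weight E indep w = Max {sum w I | I. I \<subseteq> E \<and> indep I}"

text \<open>A randomized online algorithm: a distribution of random seeds, and a decision rule which,
  given the seed, the history of earlier arrivals (element, weight) and the current arrival
  (element, weight), irrevocably accepts (True) or rejects (False) the current element.\<close>
type_synonym ('a, 'r) online_alg = "'r pmf \<times> ('r \<Rightarrow> ('a \<times> real) list \<Rightarrow> 'a \<Rightarrow> real \<Rightarrow> bool)"

definition run :: "('a, 'r) online_alg \<Rightarrow> 'r \<Rightarrow> 'a list \<Rightarrow> ('a \<Rightarrow> real) \<Rightarrow> 'a set" where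
  "run A r \<sigma> w = {\<sigma> ! i | i. i < length \<sigma> \<and>
      snd A r (map (\<lambda>x. (x, w x)) (take i \<sigma>)) (\<sigma> ! i) (w (\<sigma> ! i))}"

definition feasible_alg :: "'a set \<Rightarrow> ('a set \<Rightarrow> bool) \<Rightarrow> ('a, 'r) online_alg \<Rightarrow> bool" where
  "feasible_alg E indep A \<longleftrightarrow> (\<forall>r \<in> set_pmf (fst A). \<forall>\<sigma> \<in> permutations_of_set E. \<forall>w.
      (\<forall>e\<in>E. 0 \<le> w e) \<longrightarrow> indep (run A r \<sigma> w))"

definition expected_alg :: "'a set \<Rightarrow> ('a, 'r) online_alg \<Rightarrow> ('a \<Rightarrow> real) \<Rightarrow> real" where
  "expected_alg E A w = measure_pmf.expectation
      (fst A \<bind> (\<lambda>r. map_pmf (\<lambda>\<sigma>. run A r \<sigma> w) (pmf_of_set (permutations_of_set E))))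
      (\<lambda>S. sum w S)"

definition competitive :: "'a set \<Rightarrow> ('a set \<Rightarrow> bool) \<Rightarrow> ('a, 'r) online_alg \<Rightarrow> real \<Rightarrow> bool" where
  "competitive E indep A \<alpha> \<longleftrightarrow> feasible_alg E indep A \<and>
     (\<forall>w. (\<forall>e\<in>E. 0 \<le> w e) \<longrightarrow> \<alpha> * expected_alg E A w \<ge> opt_weight E indep w)"

text \<open>p is a convex combination of incidence vectors of independent sets equal to the
  all-(1/gamma) vector: a distribution on independent sets with every marginal 1/gamma.\<close>
definition uniform_marginal_decomp :: "'a set \<Rightarrow> ('a set \<Rightarrow> bool) \<Rightarrow> 'a set pmf \<Rightarrow> bool" where
  "uniform_marginal_decomp E indep p \<longleftrightarrow> (\<forall>I\<in>set_pmf p. indep I) \<and>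
     (\<forall>e\<in>E. measure_pmf.prob p {I. e \<in> I} = 1 / matroid_density E indep)"

definition fixed_set_alg :: "'a set pmf \<Rightarrow> ('a, 'a set) online_alg" where
  "fixed_set_alg p = (p, (\<lambda>I h e we. e \<in> I))"

definition composite_alg :: "'a set \<Rightarrow> ('a set \<Rightarrow> bool) \<Rightarrow> 'a set pmf \<Rightarrow>
    ('a set set \<Rightarrow> ('a, 'r) online_alg) \<Rightarrow> ('a, 'a set \<times> 'r) online_alg" where
  "composite_alg E indep p' \<A> =
     (p' \<bind> (\<lambda>I'. map_pmf (\<lambda>r. (I', r)) (fst (\<A> (parallel_class E indep ` I')))),
      (\<lambda>(I', r) h e we.
         let P = parallel_class E indep ` I' in
         e \<in> \<Union>P \<and> snd (\<A> P) r (filter (\<lambda>xw. fst xw \<in> \<Union>P) h) e we))"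

end

theory Submission
  imports Defs
begin

lemma m_finite: "matroid E indep \<Longrightarrow> finite E" by (simp add: matroid_def)
lemma m_sub: "matroid E indep \<Longrightarrow> indep I \<Longrightarrow> I \<subseteq> E" by (simp add: matroid_def)
lemma m_fin: "matroid E indep \<Longrightarrow> indep I \<Longrightarrow> finite I"
  by (meson m_finite m_sub finite_subset)
lemma m_empty: "matroid E indep \<Longrightarrow> indep {}" by (simp add: matroid_def)
lemma m_down: "matroid E indep \<Longrightarrow> indep J \<Longrightarrow> I \<subseteq> J \<Longrightarrow> indep I" unfolding matroid_def by blast
lemma m_aug: "matroid E indep \<Longrightarrow> indep I \<Longrightarrow> indep J \<Longrightarrow> card I < card J \<Longrightarrow> \<exists>x\<in>J - I. indep (insert x I)"
  by (simp add: matroid_def)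

lemma m_extend:
  assumes M: "matroid E indep"
  shows "indep A \<Longrightarrow> indep B \<Longrightarrow> card A \<le> card B \<Longrightarrow> \<exists>S. A \<subseteq> S \<and> S \<subseteq> A \<union> B \<and> indep S \<and> card S = card B"
proof (induction "card B - card A" arbitrary: A)
  case 0
  then show ?case by (intro exI[of _ A]) auto
next
  case (Suc n)
  then have "card A < card B" by simp
  then obtain x where x: "x \<in> B - A" "indep (insert x A)" using m_aug[OF M] Suc.prems by blast
  have fA: "finite A" using m_fin[OF M Suc.prems(1)] .
  then have c: "card (insert x A) = Suc (card A)" using x by simp
  then obtain S where S: "insert x A \<subseteq> S" "S \<subseteq> insert x A \<union> B" "indep S" "card S = card B"
  proof -
    have "n = card B - card (insert x A)" using c Suc.hyps(2) by simp
    moreover have "card (insert x A) \<le> card B" using c \<open>card A < card B\<close> by simp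
    ultimately show ?thesis using Suc.hyps(1)[of "insert x A"] x(2) Suc.prems(2) that by blast
  qed
  then show ?case using x by (intro exI[of _ S]) auto
qed

lemma rank_set_finite:
  assumes M: "matroid E indep" shows "finite {card I | I. I \<subseteq> X \<and> indep I}"
proof -
  have "{card I | I. I \<subseteq> X \<and> indep I} \<subseteq> card ` Pow E" using m_sub[OF M] by blast
  then show ?thesis using m_finite[OF M] finite_subset by blast
qed

lemma rank_ge:
  assumes M: "matroid E indep" and "I \<subseteq> X" "indep I" shows "card I \<le> rank indep X"
  unfolding rank_def using rank_set_finite[OF M] assms by (intro Max_ge) auto

lemma rank_attained:
  assumes M: "matroid E indep" shows "\<exists>J. J \<subseteq> X \<and> indep J \<and> card J = rank indep X"
proof -
  have "rank indep X \<in> {card I | I. I \<subseteq> X \<and> indep I}"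
    unfolding rank_def using rank_set_finite[OF M] m_empty[OF M] by (intro Max_in) auto
  then show ?thesis by auto
qed

lemma rank_extend:
  assumes M: "matroid E indep" and "indep I'" "I' \<subseteq> S"
  shows "\<exists>I. I' \<subseteq> I \<and> I \<subseteq> S \<and> indep I \<and> card I = rank indep S"
proof -
  obtain J where J: "J \<subseteq> S" "indep J" "card J = rank indep S" using rank_attained[OF M] by blast
  have "card I' \<le> card J" using rank_ge[OF M assms(3,2)] J by simp
  then obtain T where "I' \<subseteq> T" "T \<subseteq> I' \<union> J" "indep T" "card T = card J"
    using m_extend[OF M assms(2) J(2)] by blast
  then show ?thesis using J assms by (intro exI[of _ T]) auto
qed

lemma density_set_finite:
  assumes M: "matroid E indep"
  shows "finite {real (card X) / real (rank indep X) | X. X \<subseteq> E \<and> X \<noteq> {}}"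
proof -
  have "{real (card X) / real (rank indep X) | X. X \<subseteq> E \<and> X \<noteq> {}} \<subseteq> (\<lambda>X. real (card X) / real (rank indep X)) ` Pow E" by blast
  then show ?thesis using m_finite[OF M] finite_subset by blast
qed

lemma density_ge:
  assumes M: "matroid E indep" and "X \<subseteq> E" "X \<noteq> {}"
  shows "real (card X) / real (rank indep X) \<le> matroid_density E indep"
  unfolding matroid_density_def using density_set_finite[OF M] assms by (intro Max_ge) auto

lemma rank_pos:
  assumes M: "matroid E indep" and LL: "loopless E indep" and "X \<subseteq> E" "X \<noteq> {}"
  shows "rank indep X \<ge> 1"
proof -
  obtain x where "x \<in> X" using assms by blast
  then have "indep {x}" "{x} \<subseteq> X" using LL assms unfolding loopless_def by auto
  from rank_ge[OF M this(2,1)] show ?thesis by simp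
qed

lemma density_card:
  assumes M: "matroid E indep" and LL: "loopless E indep" and "X \<subseteq> E"
  shows "real (card X) \<le> matroid_density E indep * real (rank indep X)"
proof (cases "X = {}")
  case True
  have "{card I | I. I \<subseteq> X \<and> indep I} = {0}" using True m_empty[OF M] by auto
  then have "rank indep X = 0" unfolding rank_def by simp
  then show ?thesis using True by simp
next
  case False
  have r: "real (rank indep X) > 0" using rank_pos[OF M LL assms(3) False] by simp
  have "real (card X) / real (rank indep X) \<le> matroid_density E indep" using density_ge[OF M assms(3) False] .
  then show ?thesis using r by (simp add: divide_le_eq mult.commute)
qed

lemma density_pos:
  assumes M: "matroid E indep" and LL: "loopless E indep" and "E \<noteq> {}"
  shows "matroid_density E indep > 0"
proof -
  obtain x where x: "x \<in> E" using assms by blast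
  have "rank indep {x} \<le> 1"
  proof -
    obtain J where "J \<subseteq> {x}" "card J = rank indep {x}" using rank_attained[OF M] by blast
    moreover have "card J \<le> 1" using \<open>J \<subseteq> {x}\<close> using card_mono[of "{x}" J] by simp
    ultimately show ?thesis by simp
  qed
  moreover have "rank indep {x} \<ge> 1" using rank_pos[OF M LL, of "{x}"] x by simp
  ultimately have "rank indep {x} = 1" by simp
  then show ?thesis using density_ge[OF M, of "{x}"] x by simp
qed

lemma greedy_nonneg:
  assumes M: "matroid E indep" and LL: "loopless E indep"
  shows "(\<forall>e\<in>E. 0 \<le> w e) \<Longrightarrow> \<exists>I. indep I \<and> I \<subseteq> {e\<in>E. 0 < w e} \<and> sum w E \<le> matroid_density E indep * sum w I"
proof (induction "card {e\<in>E. 0 < w e}" arbitrary: w rule: less_induct)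
  case less
  define S where "S = {e\<in>E. 0 < w e}"
  define g where "g = matroid_density E indep"
  have fE: "finite E" using m_finite[OF M] .
  have fS: "finite S" using fE unfolding S_def by simp
  show ?case
  proof (cases "S = {}")
    case True
    then have "\<forall>e\<in>E. w e = 0" using less.prems unfolding S_def by force
    then have "sum w E = 0" by simp
    then show ?thesis using m_empty[OF M] by (intro exI[of _ "{}"]) simp
  next
    case False
    have Epos: "E \<noteq> {}" using False unfolding S_def by blast
    have gpos: "g > 0" unfolding g_def using density_pos[OF M LL Epos] .
    define c where "c = Min (w ` S)"
    have cin: "c \<in> w ` S" unfolding c_def using fS False by (intro Min_in) auto
    then obtain e0 where e0: "e0 \<in> S" "w e0 = c" by auto
    have cle: "\<And>e. e \<in> S \<Longrightarrow> c \<le> w e" unfolding c_def using fS by (intro Min_le) auto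
    have cpos: "c > 0" using e0 unfolding S_def by auto
    define w' where "w' = (\<lambda>e. w e - (if e \<in> S then c else 0))"
    have w'nn: "\<forall>e\<in>E. 0 \<le> w' e" unfolding w'_def using cle less.prems by auto
    have sub: "{e\<in>E. 0 < w' e} \<subseteq> S - {e0}" unfolding w'_def S_def using e0 less.prems by (auto split: if_splits)
    have "card {e\<in>E. 0 < w' e} < card S"
      using psubset_card_mono[OF fS] sub e0 by (metis Diff_subset card_Diff1_less fS le_less_trans card_mono finite_Diff)
    then obtain I' where I': "indep I'" "I' \<subseteq> {e\<in>E. 0 < w' e}" "sum w' E \<le> g * sum w' I'"
      using less.hyps[of w'] w'nn unfolding S_def g_def by blast
    have I'S: "I' \<subseteq> S" using I'(2) sub by blast
    have SE: "S \<subseteq> E" unfolding S_def by blast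
    obtain I where I: "I' \<subseteq> I" "I \<subseteq> S" "indep I" "card I = rank indep S"
      using rank_extend[OF M I'(1) I'S] by blast
    have fI: "finite I" using fS I(2) finite_subset by blast
    have sumI: "sum w I = sum w' I + c * card I"
    proof -
      have "sum w' I = sum (\<lambda>e. w e - c) I" unfolding w'_def using I(2) by (intro sum.cong) auto
      also have "\<dots> = sum w I - c * card I" by (simp add: sum_subtractf)
      finally show ?thesis by simp
    qed
    have mono: "sum w' I' \<le> sum w' I"
      using fI I(1) w'nn I(2) SE by (intro sum_mono2) auto
    have sumE: "sum w E = sum w' E + c * card S"
    proof -
      have "sum (\<lambda>e. if e \<in> S then c else 0) E = c * card S"
        using fE SE by (simp add: sum.If_cases Int_absorb1)
      then show ?thesis unfolding w'_def by (simp add: sum_subtractf)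
    qed
    have dc: "real (card S) \<le> g * real (rank indep S)" unfolding g_def using density_card[OF M LL SE] .
    have "sum w E \<le> g * sum w' I' + c * card S" using sumE I'(3) by simp
    also have "\<dots> \<le> g * sum w' I + c * (g * card I)"
      using mono gpos cpos dc I(4) by (intro add_mono mult_left_mono) auto
    also have "\<dots> = g * sum w I" using sumI by (simp add: algebra_simps)
    finally show ?thesis using I(3) I(2) unfolding S_def g_def by blast
  qed
qed

lemma greedy_any:
  assumes M: "matroid E indep" and LL: "loopless E indep"
  shows "\<exists>I. indep I \<and> sum w E \<le> matroid_density E indep * sum w I"
proof -
  define u where "u = (\<lambda>e. max (w e) 0)"
  obtain I where I: "indep I" "I \<subseteq> {e\<in>E. 0 < u e}" "sum u E \<le> matroid_density E indep * sum u I"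
    using greedy_nonneg[OF M LL, of u] unfolding u_def by auto
  have "sum u I = sum w I" using I(2) unfolding u_def by (intro sum.cong) auto
  moreover have "sum w E \<le> sum u E" unfolding u_def by (intro sum_mono) auto
  ultimately show ?thesis using I by (intro exI[of _ I]) auto
qed

lemma pmf_from_weights:
  fixes l :: "'b \<Rightarrow> real"
  assumes F: "finite F" and nn: "\<And>I. 0 \<le> l I" and z: "\<And>I. I \<notin> F \<Longrightarrow> l I = 0" and s: "sum l F = 1"
  shows "\<exists>p. set_pmf p \<subseteq> F \<and> (\<forall>I. pmf p I = l I)"
proof -
  have "(\<integral>\<^sup>+x. ennreal (l x) \<partial>count_space UNIV) = (\<Sum>x\<in>F. ennreal (l x))"
    using F z by (intro nn_integral_count_space') auto
  also have "\<dots> = ennreal (sum l F)" using nn by (intro sum_ennreal) auto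
  finally have prob: "(\<integral>\<^sup>+x. ennreal (l x) \<partial>count_space UNIV) = 1" using s by simp
  have pm: "pmf (embed_pmf l) I = l I" for I using pmf_embed_pmf[OF nn prob] .
  have "set_pmf (embed_pmf l) \<subseteq> F" using set_embed_pmf[OF nn prob] z by auto
  then show ?thesis using pm by blast
qed

lemma simplex_compact:
  fixes F :: "'b set"
  assumes F: "finite F"
  shows "compact {l :: 'b \<Rightarrow> real. (\<forall>I. 0 \<le> l I) \<and> (\<forall>I. I \<notin> F \<longrightarrow> l I = 0) \<and> sum l F = 1}"
proof -
  define S where "S = (\<lambda>I::'b. if I \<in> F then {0..1::real} else {0})"
  have "compactin (product_topology (\<lambda>_. euclidean) UNIV) (PiE UNIV S)"
    by (subst compactin_PiE) (auto simp: S_def)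
  then have K: "compact (PiE UNIV S)" by (simp add: euclidean_product_topology)
  have C: "closed {l :: 'b \<Rightarrow> real. sum l F = 1}"
    by (intro closed_Collect_eq continuous_on_sum continuous_on_const) simp
  have eq: "{l :: 'b \<Rightarrow> real. (\<forall>I. 0 \<le> l I) \<and> (\<forall>I. I \<notin> F \<longrightarrow> l I = 0) \<and> sum l F = 1}
      = PiE UNIV S \<inter> {l. sum l F = 1}"
  proof (intro equalityI subsetI)
    fix l assume l: "l \<in> {l :: 'b \<Rightarrow> real. (\<forall>I. 0 \<le> l I) \<and> (\<forall>I. I \<notin> F \<longrightarrow> l I = 0) \<and> sum l F = 1}"
    have "l I \<le> 1" if "I \<in> F" for I
    proof -
      have "l I \<le> sum l F" using F that l by (intro member_le_sum) auto
      then show ?thesis using l by simp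
    qed
    then show "l \<in> PiE UNIV S \<inter> {l. sum l F = 1}" using l by (auto simp: S_def PiE_def extensional_def)
  next
    fix l assume l: "l \<in> PiE UNIV S \<inter> {l. sum l F = 1}"
    have li: "l I \<in> S I" for I using l by (auto simp: PiE_def Pi_def)
    have "0 \<le> l I \<and> (I \<notin> F \<longrightarrow> l I = 0)" for I
      using li[of I] unfolding S_def by (cases "I \<in> F") auto
    then show "l \<in> {l :: 'b \<Rightarrow> real. (\<forall>I. 0 \<le> l I) \<and> (\<forall>I. I \<notin> F \<longrightarrow> l I = 0) \<and> sum l F = 1}"
      using l by auto
  qed
  show ?thesis unfolding eq using K C by (rule compact_Int_closed)
qed

lemma small_t:
  fixes a D :: real
  assumes D: "D \<ge> 0" and H: "\<And>t. 0 < t \<Longrightarrow> t \<le> 1 \<Longrightarrow> 2 * a \<le> t * D"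
  shows "a \<le> 0"
proof (rule ccontr)
  assume "\<not> a \<le> 0"
  then have a: "a > 0" by simp
  define t where "t = min 1 (a / (D + 1))"
  have t: "0 < t" "t \<le> 1" unfolding t_def using a D by auto
  have "t * D \<le> (a / (D + 1)) * D" unfolding t_def using D by (intro mult_right_mono) auto
  also have "\<dots> < a" using a D by (simp add: field_simps)
  finally show False using H[OF t] a by simp
qed

lemma decomp_exists:
  assumes M: "matroid E indep" and LL: "loopless E indep"
  shows "\<exists>p. uniform_marginal_decomp E indep p"
proof (cases "E = {}")
  case True
  show ?thesis using m_empty[OF M] True
    by (intro exI[of _ "return_pmf {}"]) (simp add: uniform_marginal_decomp_def)
next
  case False
  define g where "g = matroid_density E indep"
  have gpos: "g > 0" unfolding g_def using density_pos[OF M LL False] .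
  define v where "v = 1 / g"
  define F where "F = {I. indep I}"
  have fE: "finite E" using m_finite[OF M] .
  have FP: "F \<subseteq> Pow E" unfolding F_def using m_sub[OF M] by blast
  have fF: "finite F" using FP fE finite_subset by blast
  have eF: "{} \<in> F" unfolding F_def using m_empty[OF M] by simp
  define chi :: "'a set \<Rightarrow> 'a \<Rightarrow> real" where "chi = (\<lambda>I e. if e \<in> I then 1 else 0)"
  define Y where "Y = (\<lambda>l e. \<Sum>I\<in>F. l I * chi I e)"
  define G where "G = (\<lambda>l. \<Sum>e\<in>E. (v - Y l e)\<^sup>2)"
  define D where "D = {l :: 'a set \<Rightarrow> real. (\<forall>I. 0 \<le> l I) \<and> (\<forall>I. I \<notin> F \<longrightarrow> l I = 0) \<and> sum l F = 1}"
  have cD: "compact D" unfolding D_def using simplex_compact[OF fF] .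
  have neD: "(\<lambda>I. if I = {} then 1 else 0) \<in> D" unfolding D_def using fF eF by (auto simp: sum.delta)
  have contG: "continuous_on D G" unfolding G_def Y_def
    by (intro continuous_intros continuous_on_subset[OF continuous_on_product_coordinates]) auto
  obtain l0 where l0: "l0 \<in> D" "\<And>l. l \<in> D \<Longrightarrow> G l0 \<le> G l"
    using continuous_attains_inf[OF cD _ contG] neD by blast
  define y where "y = Y l0"
  define w where "w = (\<lambda>e. v - y e)"
  have key: "sum w J \<le> (\<Sum>e\<in>E. w e * y e)" if J: "J \<in> F" for J
  proof -
    define d where "d = (\<lambda>e. chi J e - y e)"
    have step: "2 * (\<Sum>e\<in>E. w e * d e) \<le> t * (\<Sum>e\<in>E. (d e)\<^sup>2)" if t: "0 < t" "t \<le> 1" for t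
    proof -
      define lt where "lt = (\<lambda>I. (1 - t) * l0 I + t * (if I = J then 1 else 0))"
      have "lt \<in> D" using l0(1) t J fF unfolding D_def lt_def
        by (auto simp: sum.distrib sum_distrib_left[symmetric] sum.delta)
      then have le: "G l0 \<le> G lt" using l0(2) by blast
      have Ylt: "Y lt e = (1 - t) * y e + t * chi J e" for e
      proof -
        have "Y lt e = (\<Sum>I\<in>F. (1 - t) * (l0 I * chi I e) + t * (if I = J then chi J e else 0))"
          unfolding Y_def lt_def by (rule sum.cong[OF refl]) (cases "I = J"; simp add: ring_distribs)
        also have "\<dots> = (1 - t) * (\<Sum>I\<in>F. l0 I * chi I e) + t * chi J e"
          using J fF by (simp add: sum.distrib sum_distrib_left[symmetric] sum.delta)
        finally show ?thesis unfolding y_def Y_def .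
      qed
      have "G lt = (\<Sum>e\<in>E. (w e - t * d e)\<^sup>2)"
        unfolding G_def Ylt w_def d_def by (intro sum.cong) (auto simp: algebra_simps)
      also have "\<dots> = (\<Sum>e\<in>E. (w e)\<^sup>2 - 2 * t * (w e * d e) + t\<^sup>2 * (d e)\<^sup>2)"
        by (rule sum.cong[OF refl]) algebra
      also have "\<dots> = (\<Sum>e\<in>E. (w e)\<^sup>2) - 2 * t * (\<Sum>e\<in>E. w e * d e) + t\<^sup>2 * (\<Sum>e\<in>E. (d e)\<^sup>2)"
        by (simp only: sum.distrib sum_subtractf sum_distrib_left[symmetric])
      finally have "G lt = (\<Sum>e\<in>E. (w e)\<^sup>2) - 2 * t * (\<Sum>e\<in>E. w e * d e) + t\<^sup>2 * (\<Sum>e\<in>E. (d e)\<^sup>2)" .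
      moreover have "G l0 = (\<Sum>e\<in>E. (w e)\<^sup>2)" unfolding G_def w_def y_def by simp
      ultimately have "t * (2 * (\<Sum>e\<in>E. w e * d e)) \<le> t * (t * (\<Sum>e\<in>E. (d e)\<^sup>2))"
        using le by (simp add: power2_eq_square algebra_simps)
      then show ?thesis using t by simp
    qed
    have "(\<Sum>e\<in>E. w e * d e) \<le> 0"
      by (rule small_t[OF _ step]) (auto intro: sum_nonneg)
    moreover have "(\<Sum>e\<in>E. w e * d e) = (\<Sum>e\<in>E. w e * chi J e) - (\<Sum>e\<in>E. w e * y e)"
      unfolding d_def by (simp add: algebra_simps sum_subtractf)
    moreover have "(\<Sum>e\<in>E. w e * chi J e) = sum w J"
    proof -
      have "(\<Sum>e\<in>E. w e * chi J e) = (\<Sum>e\<in>E. if e \<in> J then w e else 0)"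
        unfolding chi_def by (intro sum.cong) auto
      also have "\<dots> = sum w (E \<inter> J)" using fE by (simp add: sum.inter_restrict)
      also have "E \<inter> J = J" using J FP by blast
      finally show ?thesis .
    qed
    ultimately show ?thesis by simp
  qed
  obtain J where J: "indep J" "sum w E \<le> g * sum w J" using greedy_any[OF M LL, of w] unfolding g_def by blast
  have "J \<in> F" using J(1) unfolding F_def by simp
  have "g * sum w J \<le> g * (\<Sum>e\<in>E. w e * y e)"
    by (rule mult_left_mono[OF key[OF \<open>J \<in> F\<close>]]) (use gpos in simp)
  then have "sum w E \<le> g * (\<Sum>e\<in>E. w e * y e)" using J(2) by linarith
  then have "(\<Sum>e\<in>E. w e * v) \<le> (\<Sum>e\<in>E. w e * y e)"
    using gpos unfolding v_def by (simp add: sum_divide_distrib[symmetric] divide_le_eq mult.commute)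
  moreover have "(\<Sum>e\<in>E. (w e)\<^sup>2) = (\<Sum>e\<in>E. w e * v) - (\<Sum>e\<in>E. w e * y e)"
  proof -
    have "(\<Sum>e\<in>E. (w e)\<^sup>2) = (\<Sum>e\<in>E. w e * v - w e * y e)"
      by (rule sum.cong[OF refl]) (simp add: w_def power2_eq_square right_diff_distrib)
    then show ?thesis by (simp only: sum_subtractf)
  qed
  ultimately have "(\<Sum>e\<in>E. (w e)\<^sup>2) \<le> 0" by linarith
  then have "\<forall>e\<in>E. (w e)\<^sup>2 = 0"
    using sum_nonneg_eq_0_iff[OF fE, of "\<lambda>e. (w e)\<^sup>2"] by (simp add: order_antisym sum_nonneg)
  then have yv: "\<forall>e\<in>E. y e = v" unfolding w_def by simp
  obtain p where p: "set_pmf p \<subseteq> F" "\<forall>I. pmf p I = l0 I"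
    using pmf_from_weights[OF fF, of l0] l0(1) unfolding D_def by blast
  have "measure_pmf.prob p {I. e \<in> I} = v" if e: "e \<in> E" for e
  proof -
    have "measure_pmf.prob p {I. e \<in> I} = measure_pmf.prob p ({I. e \<in> I} \<inter> set_pmf p)"
      by (simp add: measure_Int_set_pmf)
    also have "\<dots> = sum (pmf p) ({I. e \<in> I} \<inter> set_pmf p)"
      using p(1) fF finite_subset by (intro measure_measure_pmf_finite) blast
    also have "\<dots> = sum (pmf p) (F \<inter> {I. e \<in> I})"
      using p(1) fF by (intro sum.mono_neutral_left) (auto simp: set_pmf_eq)
    also have "\<dots> = (\<Sum>I\<in>F. if I \<in> {I. e \<in> I} then pmf p I else 0)"
      using fF by (simp add: sum.inter_restrict)
    also have "\<dots> = y e" unfolding y_def Y_def chi_def using p(2) by (intro sum.cong) auto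
    finally show ?thesis using yv e by simp
  qed
  then show ?thesis using p(1) unfolding uniform_marginal_decomp_def F_def v_def g_def by blast
qed

lemma expectation_bind_bounded:
  fixes f :: "'b \<Rightarrow> real"
  assumes "\<And>x. \<bar>f x\<bar> \<le> B"
  shows "measure_pmf.expectation (bind_pmf p N) f = measure_pmf.expectation p (\<lambda>x. measure_pmf.expectation (N x) f)"
  unfolding measure_pmf_bind
  by (rule integral_bind[where K="count_space UNIV" and B=B and B'=1])
     (auto simp: assms measure_pmf.emeasure_space_1 measure_pmf_in_subprob_algebra intro: measure_pmf.finite_measure_axioms)

lemma expectation_sum_inter:
  fixes w :: "'a \<Rightarrow> real"
  assumes fE: "finite E"
  shows "measure_pmf.expectation q (\<lambda>I. sum w (I \<inter> E)) = (\<Sum>e\<in>E. w e * measure_pmf.prob q {I. e \<in> I})"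
proof -
  have "measure_pmf.expectation q (\<lambda>I. sum w (I \<inter> E)) = measure_pmf.expectation q (\<lambda>I. \<Sum>e\<in>E. w e * indicator {I. e \<in> I} I)"
  proof (rule Bochner_Integration.integral_cong[OF refl])
    fix I
    have "sum w (I \<inter> E) = sum w (E \<inter> I)" by (simp add: Int_commute)
    also have "\<dots> = (\<Sum>e\<in>E. if e \<in> I then w e else 0)" using fE by (simp add: sum.inter_restrict)
    also have "\<dots> = (\<Sum>e\<in>E. w e * indicator {I. e \<in> I} I)" by (intro sum.cong) (auto simp: indicator_def)
    finally show "sum w (I \<inter> E) = (\<Sum>e\<in>E. w e * indicator {I. e \<in> I} I)" .
  qed
  also have "\<dots> = (\<Sum>e\<in>E. measure_pmf.expectation q (\<lambda>I. w e * indicator {I. e \<in> I} I))"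
    by (intro Bochner_Integration.integral_sum) (auto intro!: integrable_mult_right integrable_real_indicator simp: measure_pmf.emeasure_finite less_top[symmetric])
  also have "\<dots> = (\<Sum>e\<in>E. w e * measure_pmf.prob q {I. e \<in> I})"
    by (intro sum.cong refl) simp
  finally show ?thesis .
qed

lemma run_fixed: "run (fixed_set_alg p) I \<sigma> w = I \<inter> set \<sigma>"
  unfolding run_def fixed_set_alg_def by (auto simp: in_set_conv_nth)

lemma opt_weight_le_sum:
  assumes M: "matroid E indep" and nn: "\<forall>e\<in>E. 0 \<le> w e"
  shows "opt_weight E indep w \<le> sum w E"
proof -
  have fin: "finite {sum w I | I. I \<subseteq> E \<and> indep I}"
  proof -
    have "{sum w I | I. I \<subseteq> E \<and> indep I} \<subseteq> sum w ` Pow E" by blast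
    then show ?thesis using m_finite[OF M] finite_subset by blast
  qed
  have ne: "{sum w I | I. I \<subseteq> E \<and> indep I} \<noteq> {}" using m_empty[OF M] by blast
  have "\<forall>x\<in>{sum w I | I. I \<subseteq> E \<and> indep I}. x \<le> sum w E"
    using nn m_finite[OF M] by (auto intro!: sum_mono2)
  then show ?thesis unfolding opt_weight_def using fin ne by (simp add: Max_le_iff)
qed

lemma opt_weight_ge:
  assumes M: "matroid E indep" and "I \<subseteq> E" "indep I"
  shows "sum w I \<le> opt_weight E indep w"
proof -
  have fin: "finite {sum w I | I. I \<subseteq> E \<and> indep I}"
  proof -
    have "{sum w I | I. I \<subseteq> E \<and> indep I} \<subseteq> sum w ` Pow E" by blast
    then show ?thesis using m_finite[OF M] finite_subset by blast
  qed
  show ?thesis unfolding opt_weight_def using fin assms by (intro Max_ge) auto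
qed

lemma part_i_competitive:
  assumes M: "matroid E indep" and LL: "loopless E indep" and p: "uniform_marginal_decomp E indep p"
  shows "competitive E indep (fixed_set_alg p) (matroid_density E indep)"
proof -
  have fE: "finite E" using m_finite[OF M] .
  have pind: "\<And>I. I \<in> set_pmf p \<Longrightarrow> indep I" using p unfolding uniform_marginal_decomp_def by blast
  have feas: "feasible_alg E indep (fixed_set_alg p)"
    unfolding feasible_alg_def
  proof (intro ballI allI impI)
    fix r \<sigma> w assume r: "r \<in> set_pmf (fst (fixed_set_alg p))"
    then have "indep r" using pind by (simp add: fixed_set_alg_def)
    then show "indep (run (fixed_set_alg p) r \<sigma> w)" unfolding run_fixed by (rule m_down[OF M]) (rule Int_lower1)
  qed
  have exp: "expected_alg E (fixed_set_alg p) w = (\<Sum>e\<in>E. w e * (1 / matroid_density E indep))" for w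
  proof -
    have "fst (fixed_set_alg p) \<bind> (\<lambda>r. map_pmf (\<lambda>\<sigma>. run (fixed_set_alg p) r \<sigma> w) (pmf_of_set (permutations_of_set E)))
        = p \<bind> (\<lambda>r. return_pmf (r \<inter> E))"
    proof (rule bind_pmf_cong)
      show "fst (fixed_set_alg p) = p" by (simp add: fixed_set_alg_def)
    next
      fix r
      have "map_pmf (\<lambda>\<sigma>. run (fixed_set_alg p) r \<sigma> w) (pmf_of_set (permutations_of_set E))
          = map_pmf (\<lambda>_. r \<inter> E) (pmf_of_set (permutations_of_set E))"
        using fE by (intro map_pmf_cong refl) (auto simp: run_fixed dest: permutations_of_setD)
      then show "map_pmf (\<lambda>\<sigma>. run (fixed_set_alg p) r \<sigma> w) (pmf_of_set (permutations_of_set E)) = return_pmf (r \<inter> E)"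
        by simp
    qed
    also have "\<dots> = map_pmf (\<lambda>r. r \<inter> E) p" by (simp add: map_pmf_def)
    finally have eq: "fst (fixed_set_alg p) \<bind> (\<lambda>r. map_pmf (\<lambda>\<sigma>. run (fixed_set_alg p) r \<sigma> w) (pmf_of_set (permutations_of_set E))) = map_pmf (\<lambda>r. r \<inter> E) p" .
    have "expected_alg E (fixed_set_alg p) w = measure_pmf.expectation p (\<lambda>I. sum w (I \<inter> E))"
      unfolding expected_alg_def eq by simp
    also have "\<dots> = (\<Sum>e\<in>E. w e * measure_pmf.prob p {I. e \<in> I})" using expectation_sum_inter[OF fE] .
    also have "\<dots> = (\<Sum>e\<in>E. w e * (1 / matroid_density E indep))"
      using p unfolding uniform_marginal_decomp_def by (intro sum.cong) auto
    finally show ?thesis .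
  qed
  have "opt_weight E indep w \<le> matroid_density E indep * expected_alg E (fixed_set_alg p) w"
    if nn: "\<forall>e\<in>E. 0 \<le> w e" for w
  proof (cases "E = {}")
    case True
    then show ?thesis using opt_weight_le_sum[OF M nn] exp[of w] by simp
  next
    case False
    have g: "matroid_density E indep > 0" using density_pos[OF M LL False] .
    have "matroid_density E indep * expected_alg E (fixed_set_alg p) w = sum w E"
      unfolding exp using g by (simp add: sum_distrib_left[symmetric] sum_divide_distrib[symmetric])
    then show ?thesis using opt_weight_le_sum[OF M nn] by simp
  qed
  then show ?thesis unfolding competitive_def using feas by blast
qed

lemma par_sym: "parallel E indep e f \<Longrightarrow> parallel E indep f e"
  unfolding parallel_def by (auto simp: insert_commute)

lemma par_dep: "parallel E indep e f \<Longrightarrow> e \<noteq> f \<Longrightarrow> \<not> indep {e, f}"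
  unfolding parallel_def circuit_def by auto

lemma par_E: "parallel E indep e f \<Longrightarrow> e \<noteq> f \<Longrightarrow> e \<in> E \<and> f \<in> E"
  unfolding parallel_def circuit_def by auto

lemma par_trans:
  assumes M: "matroid E indep" and LL: "loopless E indep"
    and ef: "parallel E indep e f" and fg: "parallel E indep f g"
  shows "parallel E indep e g"
proof -
  consider "e = f" | "f = g" | "e = g" | "e \<noteq> f \<and> f \<noteq> g \<and> e \<noteq> g" by blast
  then show ?thesis
  proof cases
    case 1 then show ?thesis using fg by simp
  next
    case 2 then show ?thesis using ef by simp
  next
    case 3 then show ?thesis by (simp add: parallel_def)
  next
    case 4
    have E: "e \<in> E" "f \<in> E" "g \<in> E" using par_E[OF ef] par_E[OF fg] 4 by auto
    have d1: "\<not> indep {e, f}" using par_dep[OF ef] 4 by simp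
    have d2: "\<not> indep {f, g}" using par_dep[OF fg] 4 by simp
    have nd: "\<not> indep {e, g}"
    proof
      assume i: "indep {e, g}"
      have fi: "indep {f}" using LL E unfolding loopless_def by simp
      have "card {f} < card {e, g}" using 4 by simp
      then obtain x where x: "x \<in> {e, g} - {f}" "indep (insert x {f})" using m_aug[OF M fi i] by blast
      show False
      proof (cases "x = e")
        case True
        then have "indep {e, f}" using x by simp
        then show False using d1 by simp
      next
        case False
        then have "x = g" using x by simp
        then have "indep {f, g}" using x by (simp add: insert_commute)
        then show False using d2 by simp
      qed
    qed
    have r: "{e, g} - {g} = {e}" "{e, g} - {e} = {g}" using 4 by auto
    have "circuit E indep {e, g}"
      unfolding circuit_def using E nd LL r unfolding loopless_def by auto
    then show ?thesis unfolding parallel_def by simp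
  qed
qed

lemma par_class_mem: "a \<in> E \<Longrightarrow> a \<in> parallel_class E indep a"
  unfolding parallel_class_def parallel_def by simp

lemma par_class_sub: "parallel_class E indep a \<subseteq> E"
  unfolding parallel_class_def by auto

lemma exchange:
  assumes M: "matroid E indep" and T: "indep T" and a: "a \<in> T"
    and ax: "parallel E indep a x" and xa: "x \<noteq> a" and xT: "x \<notin> T"
  shows "indep (insert x (T - {a}))"
proof (rule ccontr)
  assume nI: "\<not> indep (insert x (T - {a}))"
  have xE: "x \<in> E" using par_E[OF ax] xa by simp
  have dep: "\<not> indep {a, x}" using par_dep[OF ax] xa by simp
  have "indep {x}"
  proof -
    have "{x} \<subseteq> insert x (T - {a})" by blast
    have "\<not> indep {a, x}" by (rule dep)
    show ?thesis
    proof (rule ccontr)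
      assume "\<not> indep {x}"
      then show False using m_down[OF M T, of "{a}"] a ax unfolding parallel_def circuit_def
        using xa by (auto simp: insert_commute)
    qed
  qed
  note xi = this
  have fT: "finite T" using m_fin[OF M T] .
  have "card {x} \<le> card T" using fT a by (auto simp: Suc_le_eq card_gt_0_iff)
  then obtain S where S: "{x} \<subseteq> S" "S \<subseteq> {x} \<union> T" "indep S" "card S = card T"
    using m_extend[OF M xi T] by blast
  have cins: "card (insert x T) = Suc (card T)" using fT xT by simp
  have "S \<noteq> insert x T" using S(4) cins by auto
  then obtain y where y: "y \<in> insert x T" "y \<notin> S" using S(2) by blast
  have yx: "y \<noteq> x" using y S(1) by blast
  have "S \<subseteq> insert x T - {y}" using S(2) y by blast
  moreover have "card (insert x T - {y}) = card S" using cins y S(4) fT by simp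
  ultimately have Seq: "S = insert x T - {y}" using fT by (intro card_subset_eq) auto
  show False
  proof (cases "y = a")
    case True
    then have "S = insert x (T - {a})" using Seq xa by blast
    then show False using nI S(3) by simp
  next
    case False
    then have "{a, x} \<subseteq> S" using Seq a yx by blast
    then show False using m_down[OF M S(3)] dep by blast
  qed
qed

lemma simp_uniq:
  assumes S: "simplification_set E indep E'" and "a \<in> E'" "b \<in> E'" "parallel E indep a b"
  shows "a = b"
proof -
  have aE: "a \<in> E" using S assms(2) unfolding simplification_set_def by blast
  then have "\<exists>!f. f \<in> E' \<and> parallel E indep a f" using S unfolding simplification_set_def by blast
  moreover have "parallel E indep a a" by (simp add: parallel_def)
  ultimately show ?thesis using assms by blast
qed

lemma indep_partition_set:
  assumes M: "matroid E indep" and LL: "loopless E indep" and S: "simplification_set E indep E'"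
    and I': "indep I'" "I' \<subseteq> E'"
    and X: "X \<subseteq> \<Union>(parallel_class E indep ` I')"
    and C: "\<forall>a\<in>I'. card (X \<inter> parallel_class E indep a) \<le> 1"
  shows "indep X"
proof -
  define cl where "cl = parallel_class E indep"
  define f where "f = (\<lambda>x. SOME a. a \<in> I' \<and> x \<in> cl a)"
  have fE: "finite E" using m_finite[OF M] .
  have "\<Union>(parallel_class E indep ` I') \<subseteq> E" by (intro UN_least par_class_sub)
  with X have XE: "X \<subseteq> E" by (rule order_trans)
  have fX: "finite X" using finite_subset[OF XE fE] .
  have f1: "f x \<in> I' \<and> x \<in> cl (f x)" if "x \<in> X" for x
  proof -
    have "\<exists>a. a \<in> I' \<and> x \<in> cl a" using X that unfolding cl_def by blast
    then show ?thesis unfolding f_def by (rule someI_ex)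
  qed
  have parf: "parallel E indep (f x) x" if "x \<in> X" for x
    using f1[OF that] unfolding cl_def parallel_class_def by blast
  have fixed: "f x = x" if "x \<in> X" "x \<in> I'" for x
  proof -
    have "f x \<in> E'" "x \<in> E'" using f1[OF that(1)] that(2) I'(2) by auto
    then show ?thesis using simp_uniq[OF S _ _ parf[OF that(1)]] by blast
  qed
  have inj: "inj_on f X"
  proof (rule inj_onI)
    fix x y assume xy: "x \<in> X" "y \<in> X" "f x = f y"
    have "x \<in> X \<inter> cl (f x)" "y \<in> X \<inter> cl (f x)" using f1[OF xy(1)] f1[OF xy(2)] xy by auto
    moreover have "card (X \<inter> cl (f x)) \<le> Suc 0" using C f1[OF xy(1)] unfolding cl_def by simp
    moreover have "finite (X \<inter> cl (f x))" using fX by simp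
    ultimately show "x = y" using card_le_Suc0_iff_eq by blast
  qed
  have main: "finite D \<Longrightarrow> D \<subseteq> X \<Longrightarrow> indep (D \<union> f ` (X - D))" for D
  proof (induction D rule: finite_induct)
    case empty
    have "f ` X \<subseteq> I'" using f1 by blast
    then show ?case using m_down[OF M I'(1)] by simp
  next
    case (insert x D)
    define K where "K = D \<union> f ` (X - D)"
    have K: "indep K" using insert unfolding K_def by simp
    have xX: "x \<in> X" using insert by simp
    have fxK: "f x \<in> K" unfolding K_def using xX insert(2) by blast
    have fxD: "f x \<notin> D"
    proof
      assume fD: "f x \<in> D"
      then have "f x \<in> X" using insert by blast
      then have "f (f x) = f x" using fixed f1[OF xX] by blast
      then have "f x = x" using inj \<open>f x \<in> X\<close> xX unfolding inj_on_def by blast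
      then show False using fD insert(2) by simp
    qed
    have img: "f ` (X - insert x D) = f ` (X - D) - {f x}"
    proof -
      have "X - insert x D = (X - D) - {x}" by blast
      moreover have "f ` (X - D - {x}) = f ` (X - D) - f ` {x}"
        by (rule inj_on_image_set_diff[OF inj]) (use xX in auto)
      ultimately have "f ` (X - insert x D) = f ` (X - D) - f ` {x}" by simp
      then show ?thesis by simp
    qed
    have T: "insert x D \<union> f ` (X - insert x D) = insert x (K - {f x})"
      unfolding img K_def using fxD by blast
    show ?case
    proof (cases "f x = x")
      case True
      then have "insert x (K - {f x}) = K" using fxK by (simp add: insert_Diff insert_absorb)
      then show ?thesis using T K by simp
    next
      case False
      have xK: "x \<notin> K"
      proof
        assume "x \<in> K"
        then have "x \<in> f ` (X - D)" unfolding K_def using insert(2) by blast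
        then obtain z where z: "z \<in> X" "x = f z" by blast
        then have "x \<in> I'" using f1 by blast
        then show False using fixed[OF xX] False by simp
      qed
      have "indep (insert x (K - {f x}))"
        using exchange[OF M K fxK parf[OF xX] _ xK] False by simp
      then show ?thesis using T by simp
    qed
  qed
  show ?thesis using main[OF fX] by simp
qed

lemma nth_set_cons:
  "{(x#l)!i | i. i < length (x#l) \<and> P (take i (x#l)) ((x#l)!i)} =
     (if P [] x then {x} else {}) \<union> {l!i | i. i < length l \<and> P (x # take i l) (l!i)}"
proof (intro equalityI subsetI)
  fix y assume "y \<in> {(x#l)!i | i. i < length (x#l) \<and> P (take i (x#l)) ((x#l)!i)}"
  then obtain i where i: "y = (x#l)!i" "i < length (x#l)" "P (take i (x#l)) ((x#l)!i)" by blast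
  show "y \<in> (if P [] x then {x} else {}) \<union> {l!i | i. i < length l \<and> P (x # take i l) (l!i)}"
  proof (cases i)
    case 0 then show ?thesis using i by simp
  next
    case (Suc k) then show ?thesis using i by auto
  qed
next
  fix y assume y: "y \<in> (if P [] x then {x} else {}) \<union> {l!i | i. i < length l \<and> P (x # take i l) (l!i)}"
  show "y \<in> {(x#l)!i | i. i < length (x#l) \<and> P (take i (x#l)) ((x#l)!i)}"
  proof (cases "y \<in> {l!i | i. i < length l \<and> P (x # take i l) (l!i)}")
    case True
    then obtain i where "y = l!i" "i < length l" "P (x # take i l) (l!i)" by blast
    then show ?thesis by (intro CollectI exI[of _ "Suc i"]) simp
  next
    case False
    then have "y = x" "P [] x" using y by (auto split: if_splits)
    then show ?thesis by (intro CollectI exI[of _ 0]) simp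
  qed
qed

lemma filter_nth_set:
  "{\<sigma>!i | i. i < length \<sigma> \<and> Q (\<sigma>!i) \<and> g (filter Q (take i \<sigma>)) (\<sigma>!i)} =
   {(filter Q \<sigma>)!j | j. j < length (filter Q \<sigma>) \<and> g (take j (filter Q \<sigma>)) ((filter Q \<sigma>)!j)}"
proof (induction \<sigma> arbitrary: g)
  case Nil
  then show ?case by simp
next
  case (Cons x \<sigma>)
  define g' where "g' = (\<lambda>l. g (if Q x then x # l else l))"
  have "{(x#\<sigma>)!i | i. i < length (x#\<sigma>) \<and> Q ((x#\<sigma>)!i) \<and> g (filter Q (take i (x#\<sigma>))) ((x#\<sigma>)!i)}
     = (if Q x \<and> g [] x then {x} else {}) \<union> {\<sigma>!i | i. i < length \<sigma> \<and> Q (\<sigma>!i) \<and> g (filter Q (x # take i \<sigma>)) (\<sigma>!i)}"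
    using nth_set_cons[of x \<sigma> "\<lambda>pre e. Q e \<and> g (filter Q pre) e"] by simp
  also have "{\<sigma>!i | i. i < length \<sigma> \<and> Q (\<sigma>!i) \<and> g (filter Q (x # take i \<sigma>)) (\<sigma>!i)}
     = {\<sigma>!i | i. i < length \<sigma> \<and> Q (\<sigma>!i) \<and> g' (filter Q (take i \<sigma>)) (\<sigma>!i)}"
    unfolding g'_def by simp
  also have "\<dots> = {(filter Q \<sigma>)!j | j. j < length (filter Q \<sigma>) \<and> g' (take j (filter Q \<sigma>)) ((filter Q \<sigma>)!j)}"
    by (rule Cons.IH)
  finally have L: "{(x#\<sigma>)!i | i. i < length (x#\<sigma>) \<and> Q ((x#\<sigma>)!i) \<and> g (filter Q (take i (x#\<sigma>))) ((x#\<sigma>)!i)}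
     = (if Q x \<and> g [] x then {x} else {}) \<union> {(filter Q \<sigma>)!j | j. j < length (filter Q \<sigma>) \<and> g' (take j (filter Q \<sigma>)) ((filter Q \<sigma>)!j)}" .
  show ?case
  proof (cases "Q x")
    case True
    have "{(filter Q (x#\<sigma>))!j | j. j < length (filter Q (x#\<sigma>)) \<and> g (take j (filter Q (x#\<sigma>))) ((filter Q (x#\<sigma>))!j)}
        = (if g [] x then {x} else {}) \<union> {(filter Q \<sigma>)!j | j. j < length (filter Q \<sigma>) \<and> g (x # take j (filter Q \<sigma>)) ((filter Q \<sigma>)!j)}"
      using True nth_set_cons[of x "filter Q \<sigma>" g] by simp
    then show ?thesis using L True unfolding g'_def by simp
  next
    case False
    then show ?thesis using L unfolding g'_def by simp
  qed
qed

lemma run_composite: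
  "run (composite_alg E indep p' \<A>) (I', r) \<sigma> w =
   run (\<A> (parallel_class E indep ` I')) r (filter (\<lambda>x. x \<in> \<Union>(parallel_class E indep ` I')) \<sigma>) w"
proof -
  define U where "U = \<Union>(parallel_class E indep ` I')"
  define G where "G = (\<lambda>l e. snd (\<A> (parallel_class E indep ` I')) r (map (\<lambda>x. (x, w x)) l) e (w e))"
  have fm: "filter (\<lambda>xw. fst xw \<in> U) (map (\<lambda>x. (x, w x)) l) = map (\<lambda>x. (x, w x)) (filter (\<lambda>x. x \<in> U) l)" for l
    by (simp add: filter_map o_def)
  have "run (composite_alg E indep p' \<A>) (I', r) \<sigma> w =
     {\<sigma>!i | i. i < length \<sigma> \<and> (\<lambda>x. x \<in> U) (\<sigma>!i) \<and> G (filter (\<lambda>x. x \<in> U) (take i \<sigma>)) (\<sigma>!i)}"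
    unfolding run_def composite_alg_def G_def U_def[symmetric] using fm by (simp add: Let_def U_def)
  also have "\<dots> = run (\<A> (parallel_class E indep ` I')) r (filter (\<lambda>x. x \<in> U) \<sigma>) w"
    using filter_nth_set[of \<sigma> "\<lambda>x. x \<in> U" G] unfolding run_def G_def by simp
  finally show ?thesis unfolding U_def .
qed

lemma filter_perm_pmf:
  assumes "finite A"
  shows "map_pmf (filter Q) (pmf_of_set (permutations_of_set A)) = pmf_of_set (permutations_of_set {x\<in>A. Q x})"
proof -
  have "map_pmf (filter Q) (pmf_of_set (permutations_of_set A)) =
        map_pmf fst (map_pmf (partition Q) (pmf_of_set (permutations_of_set A)))"
    by (simp add: map_pmf_comp)
  also have "\<dots> = pmf_of_set (permutations_of_set {x\<in>A. Q x})"
    using partition_random_permutations[OF assms, of Q] by (simp add: map_fst_pair_pmf)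
  finally show ?thesis .
qed

lemma exp_cong_pmf:
  fixes f g :: "'b \<Rightarrow> real"
  assumes "\<And>x. x \<in> set_pmf q \<Longrightarrow> f x = g x"
  shows "measure_pmf.expectation q f = measure_pmf.expectation q g"
  by (rule integral_cong_AE) (auto simp: AE_measure_pmf_iff assms)

lemma exp_mono_pmf:
  fixes f g :: "'b \<Rightarrow> real"
  assumes fin: "finite (set_pmf q)" and le: "\<And>x. x \<in> set_pmf q \<Longrightarrow> f x \<le> g x"
  shows "measure_pmf.expectation q f \<le> measure_pmf.expectation q g"
proof -
  have "measure_pmf.expectation q f = (\<Sum>a\<in>set_pmf q. f a * pmf q a)"
    using fin by (intro integral_measure_pmf_real) auto
  also have "\<dots> \<le> (\<Sum>a\<in>set_pmf q. g a * pmf q a)"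
    using le by (intro sum_mono mult_right_mono) auto
  also have "\<dots> = measure_pmf.expectation q g"
    using fin by (intro integral_measure_pmf_real[symmetric]) auto
  finally show ?thesis .
qed

lemma run_sub: "run A r \<sigma> w \<subseteq> set \<sigma>"
  unfolding run_def by auto

lemma opt_weight_ge':
  assumes "finite E" and "I \<subseteq> E" "indep I"
  shows "sum w I \<le> opt_weight E indep w"
proof -
  have fin: "finite {sum w I | I. I \<subseteq> E \<and> indep I}"
  proof -
    have "{sum w I | I. I \<subseteq> E \<and> indep I} \<subseteq> sum w ` Pow E" by blast
    then show ?thesis using assms(1) finite_subset by blast
  qed
  show ?thesis unfolding opt_weight_def using fin assms by (intro Max_ge) auto
qed

lemma restrict_matroid:
  assumes M: "matroid E indep" and sub: "E' \<subseteq> E"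
  shows "matroid E' (restrict_indep indep E')"
proof -
  have "finite E'" using m_finite[OF M] sub finite_subset by blast
  moreover have "\<forall>I J. restrict_indep indep E' I \<and> restrict_indep indep E' J \<and> card I < card J \<longrightarrow>
      (\<exists>x\<in>J - I. restrict_indep indep E' (insert x I))"
  proof (intro allI impI)
    fix I J assume h: "restrict_indep indep E' I \<and> restrict_indep indep E' J \<and> card I < card J"
    then obtain x where "x \<in> J - I" "indep (insert x I)"
      using m_aug[OF M] unfolding restrict_indep_def by blast
    then show "\<exists>x\<in>J - I. restrict_indep indep E' (insert x I)"
      using h unfolding restrict_indep_def by blast
  qed
  ultimately show ?thesis unfolding matroid_def restrict_indep_def
    using m_empty[OF M] m_down[OF M] by blast
qed

lemma restrict_loopless:
  assumes LL: "loopless E indep" and sub: "E' \<subseteq> E"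
  shows "loopless E' (restrict_indep indep E')"
  using assms unfolding loopless_def restrict_indep_def by blast

lemma cl_uniq:
  assumes M: "matroid E indep" and LL: "loopless E indep" and S: "simplification_set E indep E'"
    and a: "a \<in> E'" and b: "b \<in> E'" and x: "x \<in> parallel_class E indep a" "x \<in> parallel_class E indep b"
  shows "a = b"
proof -
  have "parallel E indep a x" "parallel E indep b x" using x unfolding parallel_class_def by auto
  then have "parallel E indep a b" using par_trans[OF M LL] par_sym by metis
  then show ?thesis using simp_uniq[OF S a b] by blast
qed

lemma class_partition:
  assumes M: "matroid E indep" and LL: "loopless E indep" and S: "simplification_set E indep E'"
    and I': "I' \<subseteq> E'" "finite I'"
  shows "is_partition (parallel_class E indep ` I')"
proof -
  have E'E: "E' \<subseteq> E" using S unfolding simplification_set_def by blast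
  have fE: "finite E" using m_finite[OF M] .
  have "finite (parallel_class E indep a)" for a using finite_subset[OF par_class_sub fE] .
  moreover have "parallel_class E indep a \<noteq> {}" if "a \<in> I'" for a
    using par_class_mem[of a E indep] that I' E'E by blast
  moreover have "B \<inter> C = {}" if BC: "B \<in> parallel_class E indep ` I'" "C \<in> parallel_class E indep ` I'" "B \<noteq> C" for B C
  proof -
    obtain a b where ab: "a \<in> I'" "b \<in> I'" "B = parallel_class E indep a" "C = parallel_class E indep b"
      using BC(1,2) by blast
    show ?thesis
    proof (rule ccontr)
      assume "B \<inter> C \<noteq> {}"
      then obtain x where "x \<in> B" "x \<in> C" by blast
      then have "a = b" using cl_uniq[OF M LL S, of a b x] ab I' by blast
      then show False using ab BC(3) by simp
    qed
  qed
  ultimately show ?thesis unfolding is_partition_def using I' by blast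
qed

lemma class_max:
  assumes M: "matroid E indep" and aE: "a \<in> E"
  shows "Max (w ` parallel_class E indep a) \<in> w ` parallel_class E indep a"
    and "\<And>x. x \<in> parallel_class E indep a \<Longrightarrow> w x \<le> Max (w ` parallel_class E indep a)"
proof -
  have fin: "finite (parallel_class E indep a)" using finite_subset[OF par_class_sub m_finite[OF M]] .
  have ne: "parallel_class E indep a \<noteq> {}" using par_class_mem[OF aE] by blast
  show "Max (w ` parallel_class E indep a) \<in> w ` parallel_class E indep a" using fin ne by (intro Max_in) auto
  show "\<And>x. x \<in> parallel_class E indep a \<Longrightarrow> w x \<le> Max (w ` parallel_class E indep a)"
    using fin by (intro Max_ge) auto
qed

lemma opt_le_classes:
  assumes M: "matroid E indep" and LL: "loopless E indep" and S: "simplification_set E indep E'"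
    and nn: "\<forall>e\<in>E. 0 \<le> w e"
  shows "opt_weight E indep w \<le> (\<Sum>a\<in>E'. Max (w ` parallel_class E indep a))"
proof -
  define m where "m = (\<lambda>a. Max (w ` parallel_class E indep a))"
  define rep where "rep = (\<lambda>x. THE f. f \<in> E' \<and> parallel E indep x f)"
  have fE: "finite E" using m_finite[OF M] .
  have E'E: "E' \<subseteq> E" using S unfolding simplification_set_def by blast
  have fE': "finite E'" using finite_subset[OF E'E fE] .
  have rep: "rep x \<in> E' \<and> parallel E indep x (rep x)" if "x \<in> E" for x
  proof -
    have "\<exists>!f. f \<in> E' \<and> parallel E indep x f" using S that unfolding simplification_set_def by blast
    then show ?thesis unfolding rep_def by (rule theI')
  qed
  have wm: "w x \<le> m (rep x)" if "x \<in> E" for x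
  proof -
    have "rep x \<in> E" using rep[OF that] E'E by blast
    moreover have "x \<in> parallel_class E indep (rep x)"
      unfolding parallel_class_def using that par_sym[of E indep x "rep x"] rep[OF that] by blast
    ultimately show ?thesis unfolding m_def by (rule class_max(2)[OF M])
  qed
  have mnn: "0 \<le> m a" if "a \<in> E'" for a
  proof -
    have aE: "a \<in> E" using that E'E by blast
    have "w a \<le> m a" unfolding m_def by (rule class_max(2)[OF M aE par_class_mem[OF aE]])
    then show ?thesis using nn aE by force
  qed
  have "sum w I \<le> sum m E'" if I: "I \<subseteq> E" "indep I" for I
  proof -
    have inj: "inj_on rep I"
    proof (rule inj_onI)
      fix x y assume xy: "x \<in> I" "y \<in> I" "rep x = rep y"
      have xE: "x \<in> E" and yE: "y \<in> E" using xy I by auto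
      have "parallel E indep x (rep x)" using rep[OF xE] by blast
      moreover have "parallel E indep (rep x) y" using rep[OF yE] xy(3) par_sym by metis
      ultimately have pxy: "parallel E indep x y" by (rule par_trans[OF M LL])
      show "x = y"
      proof (rule ccontr)
        assume "x \<noteq> y"
        then have "\<not> indep {x, y}" using par_dep[OF pxy] by simp
        moreover have "{x, y} \<subseteq> I" using xy by blast
        ultimately show False using m_down[OF M I(2)] by blast
      qed
    qed
    have "sum w I \<le> sum (\<lambda>x. m (rep x)) I" using wm I by (intro sum_mono) auto
    also have "\<dots> = sum m (rep ` I)" using sum.reindex[OF inj, of m] by simp
    also have "\<dots> \<le> sum m E'"
    proof (rule sum_mono2[OF fE'])
      show "rep ` I \<subseteq> E'" using rep I by blast
      show "\<And>b. b \<in> E' - rep ` I \<Longrightarrow> 0 \<le> m b" using mnn by blast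
    qed
    finally show ?thesis .
  qed
  moreover have "finite {sum w I | I. I \<subseteq> E \<and> indep I}"
  proof -
    have "{sum w I | I. I \<subseteq> E \<and> indep I} \<subseteq> sum w ` Pow E" by blast
    then show ?thesis using fE finite_subset by blast
  qed
  moreover have "{sum w I | I. I \<subseteq> E \<and> indep I} \<noteq> {}" using m_empty[OF M] by blast
  ultimately show ?thesis unfolding opt_weight_def m_def by (auto simp: Max_le_iff)
qed

lemma opt_partition_ge:
  assumes M: "matroid E indep" and LL: "loopless E indep" and S: "simplification_set E indep E'"
    and I': "I' \<subseteq> E'" "finite I'"
  shows "(\<Sum>a\<in>I'. Max (w ` parallel_class E indep a))
     \<le> opt_weight (\<Union>(parallel_class E indep ` I')) (partition_indep (parallel_class E indep ` I')) w"
proof -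
  define cl where "cl = parallel_class E indep"
  define xm where "xm = (\<lambda>a. SOME x. x \<in> cl a \<and> w x = Max (w ` cl a))"
  have E'E: "E' \<subseteq> E" using S unfolding simplification_set_def by blast
  have fE: "finite E" using m_finite[OF M] .
  have xm: "xm a \<in> cl a \<and> w (xm a) = Max (w ` cl a)" if "a \<in> I'" for a
  proof -
    have "a \<in> E" using that I' E'E by blast
    then have "Max (w ` cl a) \<in> w ` cl a" unfolding cl_def by (rule class_max(1)[OF M])
    then have "\<exists>x. x \<in> cl a \<and> w x = Max (w ` cl a)" by force
    then show ?thesis unfolding xm_def by (rule someI_ex)
  qed
  have xm_cl: "xm a \<in> cl b \<longleftrightarrow> a = b" if "a \<in> I'" "b \<in> I'" for a b
  proof
    assume "xm a \<in> cl b"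
    then show "a = b" using cl_uniq[OF M LL S, of a b "xm a"] xm[OF that(1)] that I' unfolding cl_def by blast
  next
    assume "a = b" then show "xm a \<in> cl b" using xm[OF that(1)] by simp
  qed
  have inj: "inj_on xm I'"
  proof (rule inj_onI)
    fix a b
    assume ab: "a \<in> I'" "b \<in> I'" "xm a = xm b"
    have "xm a \<in> cl a" using xm[OF ab(1)] by blast
    then have "xm b \<in> cl a" using ab(3) by simp
    then show "a = b" using xm_cl[OF ab(2) ab(1)] by simp
  qed
  define Z where "Z = xm ` I'"
  have Zsub: "Z \<subseteq> \<Union>(cl ` I')" unfolding Z_def using xm by blast
  have Zpart: "partition_indep (cl ` I') Z"
    unfolding partition_indep_def
  proof (intro conjI ballI)
    show "Z \<subseteq> \<Union>(cl ` I')" by (rule Zsub)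
  next
    fix B assume "B \<in> cl ` I'"
    then obtain b where b: "b \<in> I'" "B = cl b" by blast
    have "Z \<inter> B \<subseteq> {xm b}" unfolding Z_def b(2) using xm_cl[OF _ b(1)] by blast
    then show "card (Z \<inter> B) \<le> 1" using card_mono[of "{xm b}" "Z \<inter> B"] by simp
  qed
  have fU: "finite (\<Union>(cl ` I'))" unfolding cl_def using finite_subset[OF _ fE] par_class_sub
    by (meson UN_least)
  have "(\<Sum>a\<in>I'. Max (w ` cl a)) = (\<Sum>a\<in>I'. w (xm a))" using xm by (intro sum.cong) auto
  also have "\<dots> = sum w Z" unfolding Z_def using sum.reindex[OF inj, of w] by simp
  also have "\<dots> \<le> opt_weight (\<Union>(cl ` I')) (partition_indep (cl ` I')) w"
    by (rule opt_weight_ge'[where indep="partition_indep (cl ` I')", OF fU Zsub Zpart])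
  finally show ?thesis unfolding cl_def .
qed

lemma part_ii:
  fixes \<A> :: "'a set set \<Rightarrow> ('a, 'r) online_alg"
  assumes M: "matroid E indep" and LL: "loopless E indep" and S: "simplification_set E indep E'"
    and HA: "\<forall>P. is_partition P \<longrightarrow> competitive (\<Union>P) (partition_indep P) (\<A> P) (exp 1)"
    and p': "uniform_marginal_decomp E' (restrict_indep indep E') p'"
  shows "competitive E indep (composite_alg E indep p' \<A>) (exp 1 * matroid_density E' (restrict_indep indep E'))"
proof -
  define P where "P = (\<lambda>I'. parallel_class E indep ` I')"
  define U where "U = (\<lambda>I'. \<Union>(P I'))"
  define C where "C = composite_alg E indep p' \<A>"
  have fE: "finite E" using m_finite[OF M] .
  have E'E: "E' \<subseteq> E" using S unfolding simplification_set_def by blast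
  have fE': "finite E'" using finite_subset[OF E'E fE] .
  have p'set: "indep I' \<and> I' \<subseteq> E'" if "I' \<in> set_pmf p'" for I'
    using p' that unfolding uniform_marginal_decomp_def restrict_indep_def by blast
  have fin_p': "finite (set_pmf p')"
  proof -
    have "set_pmf p' \<subseteq> Pow E'" using p'set by blast
    then show ?thesis using fE' finite_subset by blast
  qed
  have UE: "U I' \<subseteq> E" for I' unfolding U_def P_def by (intro UN_least par_class_sub)
  have fU: "finite (U I')" for I' using finite_subset[OF UE fE] .
  have partP: "is_partition (P I')" if "I' \<in> set_pmf p'" for I'
    unfolding P_def using p'set[OF that] fE' finite_subset by (intro class_partition[OF M LL S]) auto
  have compA: "competitive (U I') (partition_indep (P I')) (\<A> (P I')) (exp 1)" if "I' \<in> set_pmf p'" for I'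
    using HA partP[OF that] unfolding U_def by blast
  have fstC: "fst C = p' \<bind> (\<lambda>I'. map_pmf (\<lambda>r. (I', r)) (fst (\<A> (P I'))))"
    unfolding C_def composite_alg_def P_def by simp
  have runC: "run C (I', r) \<sigma> w = run (\<A> (P I')) r (filter (\<lambda>x. x \<in> U I') \<sigma>) w" for I' r \<sigma> and w :: "'a \<Rightarrow> real"
    unfolding C_def P_def U_def by (rule run_composite)
  have setf: "{x\<in>E. x \<in> U I'} = U I'" for I' using UE by blast
  have permf: "filter (\<lambda>x. x \<in> U I') \<sigma> \<in> permutations_of_set (U I')"
    if "\<sigma> \<in> permutations_of_set E" for I' \<sigma>
  proof -
    have "set \<sigma> = E" "distinct \<sigma>" using permutations_of_setD[OF that] by auto
    then show ?thesis using setf[of I'] unfolding permutations_of_set_def by auto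
  qed
  have feas: "feasible_alg E indep C"
    unfolding feasible_alg_def
  proof (intro ballI allI impI)
    fix s \<sigma> and w :: "'a \<Rightarrow> real"
    assume s: "s \<in> set_pmf (fst C)" and \<sigma>: "\<sigma> \<in> permutations_of_set E" and nn: "\<forall>e\<in>E. 0 \<le> w e"
    obtain I' r where Ir: "s = (I', r)" "I' \<in> set_pmf p'" "r \<in> set_pmf (fst (\<A> (P I')))"
      using s unfolding fstC by auto
    have "feasible_alg (U I') (partition_indep (P I')) (\<A> (P I'))"
      using compA[OF Ir(2)] unfolding competitive_def by blast
    moreover have "\<forall>e\<in>U I'. 0 \<le> w e" using nn UE by blast
    ultimately have pi: "partition_indep (P I') (run (\<A> (P I')) r (filter (\<lambda>x. x \<in> U I') \<sigma>) w)"
      unfolding feasible_alg_def using Ir(3) permf[OF \<sigma>] by blast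
    define X where "X = run (\<A> (P I')) r (filter (\<lambda>x. x \<in> U I') \<sigma>) w"
    have X1: "X \<subseteq> \<Union>(parallel_class E indep ` I')" using pi unfolding X_def partition_indep_def P_def by blast
    have X2: "\<forall>a\<in>I'. card (X \<inter> parallel_class E indep a) \<le> 1" using pi unfolding X_def partition_indep_def P_def by blast
    have "indep X" using indep_partition_set[OF M LL S _ _ X1 X2] p'set[OF Ir(2)] by blast
    then show "indep (run C s \<sigma> w)" unfolding Ir(1) runC X_def .
  qed
  have perf: "opt_weight E indep w \<le> exp 1 * matroid_density E' (restrict_indep indep E') * expected_alg E C w"
    if nn: "\<forall>e\<in>E. 0 \<le> w e" for w
  proof -
    define Q where "Q = fst C \<bind> (\<lambda>s. map_pmf (\<lambda>\<sigma>. run C s \<sigma> w) (pmf_of_set (permutations_of_set E)))"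
    define h where "h = (\<lambda>S. sum w (S \<inter> E))"
    have hb: "\<bar>h S\<bar> \<le> (\<Sum>e\<in>E. \<bar>w e\<bar>)" for S
    proof -
      have "\<bar>h S\<bar> \<le> (\<Sum>e\<in>S \<inter> E. \<bar>w e\<bar>)" unfolding h_def by (rule sum_abs)
      also have "\<dots> \<le> (\<Sum>e\<in>E. \<bar>w e\<bar>)" using fE by (intro sum_mono2) auto
      finally show ?thesis .
    qed
    have pne: "permutations_of_set E \<noteq> {}" using fE by simp
    have Qsupp: "S \<subseteq> E" if "S \<in> set_pmf Q" for S
    proof -
      have "S \<in> (\<Union>s\<in>set_pmf (fst C). (\<lambda>\<sigma>. run C s \<sigma> w) ` permutations_of_set E)"
        using that pne fE unfolding Q_def by simp
      then obtain s \<sigma> where "\<sigma> \<in> permutations_of_set E" "S = run C s \<sigma> w" by blast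
      then show ?thesis using run_sub[of C s \<sigma> w] permutations_of_setD(1) by blast
    qed
    have e1: "expected_alg E C w = measure_pmf.expectation Q h"
      unfolding expected_alg_def Q_def[symmetric]
      by (rule exp_cong_pmf) (use Qsupp in \<open>auto simp: h_def Int_absorb2\<close>)
    define R where "R = (\<lambda>I'. fst (\<A> (P I')) \<bind> (\<lambda>r. map_pmf (\<lambda>\<tau>. run (\<A> (P I')) r \<tau> w) (pmf_of_set (permutations_of_set (U I')))))"
    have QR: "Q = p' \<bind> R"
    proof -
      have "Q = p' \<bind> (\<lambda>I'. fst (\<A> (P I')) \<bind> (\<lambda>r. map_pmf (\<lambda>\<sigma>. run C (I', r) \<sigma> w) (pmf_of_set (permutations_of_set E))))"
        unfolding Q_def fstC by (simp add: bind_assoc_pmf bind_map_pmf)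
      also have "\<dots> = p' \<bind> R"
      proof (intro bind_pmf_cong refl)
        fix I'
        show "fst (\<A> (P I')) \<bind> (\<lambda>r. map_pmf (\<lambda>\<sigma>. run C (I', r) \<sigma> w) (pmf_of_set (permutations_of_set E))) = R I'"
        proof -
          have "map_pmf (\<lambda>\<sigma>. run (\<A> (P I')) r (filter (\<lambda>x. x \<in> U I') \<sigma>) w) (pmf_of_set (permutations_of_set E))
             = map_pmf (\<lambda>\<tau>. run (\<A> (P I')) r \<tau> w) (pmf_of_set (permutations_of_set (U I')))" for r
          proof -
            have "map_pmf (\<lambda>\<sigma>. run (\<A> (P I')) r (filter (\<lambda>x. x \<in> U I') \<sigma>) w) (pmf_of_set (permutations_of_set E))
              = map_pmf (\<lambda>\<tau>. run (\<A> (P I')) r \<tau> w) (map_pmf (filter (\<lambda>x. x \<in> U I')) (pmf_of_set (permutations_of_set E)))"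
              by (simp add: map_pmf_comp)
            also have "\<dots> = map_pmf (\<lambda>\<tau>. run (\<A> (P I')) r \<tau> w) (pmf_of_set (permutations_of_set (U I')))"
              unfolding filter_perm_pmf[OF fE] setf ..
            finally show ?thesis .
          qed
          then show ?thesis unfolding R_def runC by simp
        qed
      qed
      finally show ?thesis .
    qed
    have e2: "measure_pmf.expectation Q h = measure_pmf.expectation p' (\<lambda>I'. measure_pmf.expectation (R I') h)"
      unfolding QR by (rule expectation_bind_bounded[OF hb])
    define X where "X = (\<lambda>I'. expected_alg (U I') (\<A> (P I')) w)"
    have RX: "measure_pmf.expectation (R I') h = X I'" if "I' \<in> set_pmf p'" for I'
    proof -
      have "S \<subseteq> U I'" if "S \<in> set_pmf (R I')" for S
      proof -
        have pne': "permutations_of_set (U I') \<noteq> {}" using fU[of I'] by simp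
        have "S \<in> (\<Union>r\<in>set_pmf (fst (\<A> (P I'))). (\<lambda>\<tau>. run (\<A> (P I')) r \<tau> w) ` permutations_of_set (U I'))"
          using that pne' fU[of I'] unfolding R_def by simp
        then obtain r \<tau> where "\<tau> \<in> permutations_of_set (U I')" "S = run (\<A> (P I')) r \<tau> w" by blast
        then show ?thesis using run_sub[of "\<A> (P I')" r \<tau> w] permutations_of_setD(1) by blast
      qed
      then have "S \<subseteq> E" if "S \<in> set_pmf (R I')" for S using that UE by blast
      then have "measure_pmf.expectation (R I') h = measure_pmf.expectation (R I') (\<lambda>S. sum w S)"
        by (intro exp_cong_pmf) (auto simp: h_def Int_absorb2)
      then show ?thesis unfolding X_def expected_alg_def R_def by simp
    qed
    have e3: "expected_alg E C w = measure_pmf.expectation p' X"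
      using e1 e2 RX exp_cong_pmf[of p' "\<lambda>I'. measure_pmf.expectation (R I') h" X] by simp
    show ?thesis
    proof (cases "E = {}")
      case True
      have "h = (\<lambda>S. 0)" unfolding h_def True by simp
      then have "expected_alg E C w = 0" using e1 by simp
      then show ?thesis using opt_weight_le_sum[OF M nn] True by simp
    next
      case False
      then obtain e where "e \<in> E" by blast
      then obtain f where "f \<in> E'" using S unfolding simplification_set_def by blast
      then have E'ne: "E' \<noteq> {}" by blast
      define g where "g = matroid_density E' (restrict_indep indep E')"
      have gpos: "g > 0" unfolding g_def
        using density_pos[OF restrict_matroid[OF M E'E] restrict_loopless[OF LL E'E] E'ne] .
      define m where "m = (\<lambda>a. Max (w ` parallel_class E indep a))"
      have lowI: "sum m I' / exp 1 \<le> X I'" if "I' \<in> set_pmf p'" for I'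
      proof -
        have "sum m I' \<le> opt_weight (U I') (partition_indep (P I')) w"
          unfolding m_def U_def P_def using p'set[OF that] fE' finite_subset
          by (intro opt_partition_ge[OF M LL S]) auto
        also have "\<dots> \<le> exp 1 * X I'"
          using compA[OF that] nn UE unfolding competitive_def X_def by blast
        finally show ?thesis by (simp add: divide_le_eq mult.commute)
      qed
      have "measure_pmf.expectation p' (\<lambda>I'. sum m I' / exp 1) \<le> measure_pmf.expectation p' X"
        by (rule exp_mono_pmf[OF fin_p' lowI])
      moreover have "measure_pmf.expectation p' (\<lambda>I'. sum m I' / exp 1) = (\<Sum>a\<in>E'. m a * (1 / g)) / exp 1"
      proof -
        have "measure_pmf.expectation p' (\<lambda>I'. sum m I' / exp 1) = measure_pmf.expectation p' (\<lambda>I'. sum m (I' \<inter> E')) / exp 1"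
          using p'set by (subst exp_cong_pmf[of p' "\<lambda>I'. sum m I' / exp 1" "\<lambda>I'. sum m (I' \<inter> E') / exp 1"])
            (auto simp: Int_absorb2)
        also have "\<dots> = (\<Sum>a\<in>E'. m a * measure_pmf.prob p' {I. a \<in> I}) / exp 1"
          using expectation_sum_inter[OF fE'] by simp
        also have "\<dots> = (\<Sum>a\<in>E'. m a * (1 / g)) / exp 1"
          using p' unfolding uniform_marginal_decomp_def g_def by simp
        finally show ?thesis .
      qed
      ultimately have le: "(\<Sum>a\<in>E'. m a * (1 / g)) / exp 1 \<le> expected_alg E C w" using e3 by simp
      define T where "T = (\<Sum>a\<in>E'. m a * (1 / g))"
      have A: "T \<le> exp 1 * expected_alg E C w" using le unfolding T_def[symmetric] by (simp add: divide_le_eq mult.commute)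
      have B: "g * T = sum m E'" unfolding T_def using gpos by (simp add: sum_distrib_left)
      have H1: "g * T \<le> g * (exp 1 * expected_alg E C w)" using mult_left_mono[OF A, of g] gpos by simp
      have H3: "g * (exp 1 * expected_alg E C w) = exp 1 * g * expected_alg E C w" by (simp add: algebra_simps)
      have "opt_weight E indep w \<le> sum m E'" unfolding m_def by (rule opt_le_classes[OF M LL S nn])
      also have "\<dots> \<le> exp 1 * g * expected_alg E C w" using H1 B H3 by linarith
      finally show ?thesis unfolding g_def .
    qed
  qed
  show ?thesis unfolding competitive_def C_def[symmetric] using feas perf by blast
qed

theorem theorem9:
  fixes E :: "'a set" and indep :: "'a set \<Rightarrow> bool"
  assumes M: "matroid E indep" and LL: "loopless E indep"
  shows "((\<exists>p. uniform_marginal_decomp E indep p) \<and>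
          (\<forall>p. uniform_marginal_decomp E indep p \<longrightarrow>
              competitive E indep (fixed_set_alg p) (matroid_density E indep)))
       \<and> (\<forall>(E' :: 'a set) (\<A> :: 'a set set \<Rightarrow> ('a, 'r) online_alg) (p' :: 'a set pmf).
          simplification_set E indep E' \<longrightarrow>
          (\<forall>P. is_partition P \<longrightarrow> competitive (\<Union>P) (partition_indep P) (\<A> P) (exp 1)) \<longrightarrow>
          uniform_marginal_decomp E' (restrict_indep indep E') p' \<longrightarrow>
          competitive E indep (composite_alg E indep p' \<A>)
            (exp 1 * matroid_density E' (restrict_indep indep E')))"
  proof (intro conjI allI impI)
  show "\<exists>p. uniform_marginal_decomp E indep p" by (rule decomp_exists[OF M LL])
next
  fix p assume "uniform_marginal_decomp E indep p"
  then show "competitive E indep (fixed_set_alg p) (matroid_density E indep)"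
    by (rule part_i_competitive[OF M LL])
next
  fix E' :: "'a set" and \<A> :: "'a set set \<Rightarrow> ('a, 'r) online_alg" and p' :: "'a set pmf"
  assume S: "simplification_set E indep E'"
    and HA: "\<forall>P. is_partition P \<longrightarrow> competitive (\<Union>P) (partition_indep P) (\<A> P) (exp 1)"
    and p': "uniform_marginal_decomp E' (restrict_indep indep E') p'"
  show "competitive E indep (composite_alg E indep p' \<A>) (exp 1 * matroid_density E' (restrict_indep indep E'))"
    by (rule part_ii[OF M LL S HA p'])
qed

end
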